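(* Consider the weak GIC with power budgets $P_1,P_2$ and a weight $\mu>0$, and consider superposition schemes in which user $i$ transmits a sum of independent Gaussian public and private code-books with public power $P_i^{(public)}$ and private power $P_i^{(private)}$, subject to $P_i^{(public)}+P_i^{(private)}\le P_i$. If a scheme maximizes $R_{ws}=R_1+\mu R_2$ over all such schemes, then $P_1^{(public)}+P_1^{(private)}=P_1$ and $P_2^{(public)}+P_2^{(private)}=P_2$; i.e., the power budgets are fully used.
   Context: Two-user weak Gaussian interference channel with unit noise: $Y_1=X_1+\sqrt{a}X_2+Z_1$, $Y_2=\sqrt{b}X_1+X_2+Z_2$, $Z_1,Z_2\sim N(0,1)$ independent of the inputs, $0<a<1$, $0<b<1$. Public code-books are decoded at both receivers (rates must be decodable at both), private code-books only at their intended receiver after removing public ones, treating the other user's private signal as noise. $R_i$ is the total (public plus private) rate of user $i$. *)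

theory Defs
  imports Complex_Main
begin

definition gcap :: "real \<Rightarrow> real" where
  "gcap x = 1/2 * log 2 (1 + x)"

text \<open>A superposition (Han-Kobayashi type) scheme for the weak Gaussian IC
  Y1 = X1 + sqrt a X2 + Z1, Y2 = sqrt b X1 + X2 + Z2.
  User i sends independent Gaussian public code-book of power Qc_i (rate T_i) and
  private code-book of power Qp_i (rate S_i); total rate R_i = T_i + S_i.
  Public messages are jointly decoded at both receivers (MAC constraints), treating
  all private signals as noise; then the own private message is decoded after removing
  the public ones, treating the other user's private signal as noise.\<close>
definition hk_feasible ::
  "real \<Rightarrow> real \<Rightarrow> real \<Rightarrow> real \<Rightarrow>
   real \<Rightarrow> real \<Rightarrow> real \<Rightarrow> real \<Rightarrow>
   real \<Rightarrow> real \<Rightarrow> real \<Rightarrow> real \<Rightarrow> bool" where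
  "hk_feasible a b P1 P2 Qc1 Qp1 Qc2 Qp2 T1 S1 T2 S2 \<longleftrightarrow>
     0 \<le> Qc1 \<and> 0 \<le> Qp1 \<and> 0 \<le> Qc2 \<and> 0 \<le> Qp2 \<and>
     Qc1 + Qp1 \<le> P1 \<and> Qc2 + Qp2 \<le> P2 \<and>
     0 \<le> T1 \<and> 0 \<le> S1 \<and> 0 \<le> T2 \<and> 0 \<le> S2 \<and>
     \<comment> \<open>public messages decoded jointly at receiver 1\<close>
     (let N1 = 1 + Qp1 + a * Qp2 in
        T1 \<le> gcap (Qc1 / N1) \<and> T2 \<le> gcap (a * Qc2 / N1) \<and>
        T1 + T2 \<le> gcap ((Qc1 + a * Qc2) / N1)) \<and>
     \<comment> \<open>public messages decoded jointly at receiver 2\<close>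
     (let N2 = 1 + b * Qp1 + Qp2 in
        T1 \<le> gcap (b * Qc1 / N2) \<and> T2 \<le> gcap (Qc2 / N2) \<and>
        T1 + T2 \<le> gcap ((b * Qc1 + Qc2) / N2)) \<and>
     \<comment> \<open>private messages, other private signal treated as noise\<close>
     S1 \<le> gcap (Qp1 / (1 + a * Qp2)) \<and>
     S2 \<le> gcap (Qp2 / (1 + b * Qp1))"

end

theory Submission
  imports Defs
begin

lemma gcap_less: "0 \<le> x \<Longrightarrow> x < y \<Longrightarrow> gcap x < gcap y"
  unfolding gcap_def by simp

theorem theorem1:
  fixes a b P1 P2 \<mu> :: real
    and Qc1 Qp1 Qc2 Qp2 T1 S1 T2 S2 :: real
  assumes "0 < a" "a < 1" "0 < b" "b < 1"
    and "0 < P1" "0 < P2" "0 < \<mu>"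
    and "hk_feasible a b P1 P2 Qc1 Qp1 Qc2 Qp2 T1 S1 T2 S2"
    and "\<forall>qc1 qp1 qc2 qp2 t1 s1 t2 s2.
           hk_feasible a b P1 P2 qc1 qp1 qc2 qp2 t1 s1 t2 s2 \<longrightarrow>
           (t1 + s1) + \<mu> * (t2 + s2) \<le> (T1 + S1) + \<mu> * (T2 + S2)"
  shows "Qc1 + Qp1 = P1 \<and> Qc2 + Qp2 = P2"
proof -
  define N1 where "N1 = 1 + Qp1 + a * Qp2"
  define N2 where "N2 = 1 + b * Qp1 + Qp2"
  have F: "0 \<le> Qc1" "0 \<le> Qp1" "0 \<le> Qc2" "0 \<le> Qp2"
     "Qc1 + Qp1 \<le> P1" "Qc2 + Qp2 \<le> P2"
     "0 \<le> T1" "0 \<le> S1" "0 \<le> T2" "0 \<le> S2"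
     "T1 \<le> gcap (Qc1 / N1)" "T2 \<le> gcap (a * Qc2 / N1)"
     "T1 + T2 \<le> gcap ((Qc1 + a * Qc2) / N1)"
     "T1 \<le> gcap (b * Qc1 / N2)" "T2 \<le> gcap (Qc2 / N2)"
     "T1 + T2 \<le> gcap ((b * Qc1 + Qc2) / N2)"
     "S1 \<le> gcap (Qp1 / (1 + a * Qp2))"
     "S2 \<le> gcap (Qp2 / (1 + b * Qp1))"
    using assms(8) unfolding hk_feasible_def Let_def N1_def N2_def by auto
  have N1p: "N1 > 0" and N2p: "N2 > 0" using F assms(1,3) unfolding N1_def N2_def
    by (auto intro!: add_pos_nonneg mult_nonneg_nonneg)
  have opt: "\<And>qc1 qp1 qc2 qp2 t1 s1 t2 s2.
           hk_feasible a b P1 P2 qc1 qp1 qc2 qp2 t1 s1 t2 s2 \<Longrightarrow>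
           (t1 + s1) + \<mu> * (t2 + s2) \<le> (T1 + S1) + \<mu> * (T2 + S2)"
    using assms(9) by blast
  have u1: "Qc1 + Qp1 = P1"
  proof (rule ccontr)
    assume "Qc1 + Qp1 \<noteq> P1"
    define d where "d = P1 - Qc1 - Qp1"
    have d: "d > 0" using F(5) \<open>Qc1 + Qp1 \<noteq> P1\<close> unfolding d_def by auto
    have g1: "T1 < gcap ((Qc1+d) / N1)"
      by (rule le_less_trans[OF F(11) gcap_less])
         (use F N1p d in \<open>auto intro: divide_strict_right_mono divide_nonneg_pos\<close>)
    have g2: "T1 < gcap (b*(Qc1+d) / N2)"
      by (rule le_less_trans[OF F(14) gcap_less])
         (use F N2p d assms(3) in \<open>auto intro: divide_strict_right_mono divide_nonneg_pos\<close>)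
    have g3: "T1 + T2 < gcap ((Qc1+d + a*Qc2) / N1)"
      by (rule le_less_trans[OF F(13) gcap_less])
         (use F N1p d assms(1) in \<open>auto intro: divide_strict_right_mono divide_nonneg_pos\<close>)
    have g4: "T1 + T2 < gcap ((b*(Qc1+d) + Qc2) / N2)"
      by (rule le_less_trans[OF F(16) gcap_less])
         (use F N2p d assms(3) in \<open>auto intro: divide_strict_right_mono divide_nonneg_pos\<close>)
    define e where "e = min (min (gcap ((Qc1+d) / N1) - T1) (gcap (b*(Qc1+d) / N2) - T1))
       (min (gcap ((Qc1+d + a*Qc2) / N1) - (T1+T2)) (gcap ((b*(Qc1+d) + Qc2) / N2) - (T1+T2)))"
    have e: "e > 0" using g1 g2 g3 g4 unfolding e_def by auto
    have "hk_feasible a b P1 P2 (Qc1+d) Qp1 Qc2 Qp2 (T1+e) S1 T2 S2"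
      unfolding hk_feasible_def Let_def N1_def[symmetric] N2_def[symmetric]
      using F d e unfolding e_def d_def by (auto simp: min_def)
    from opt[OF this] e show False by simp
  qed
  have u2: "Qc2 + Qp2 = P2"
  proof (rule ccontr)
    assume "Qc2 + Qp2 \<noteq> P2"
    define d where "d = P2 - Qc2 - Qp2"
    have d: "d > 0" using F(6) \<open>Qc2 + Qp2 \<noteq> P2\<close> unfolding d_def by auto
    have g1: "T2 < gcap (a*(Qc2+d) / N1)"
      by (rule le_less_trans[OF F(12) gcap_less])
         (use F N1p d assms(1) in \<open>auto intro: divide_strict_right_mono divide_nonneg_pos\<close>)
    have g2: "T2 < gcap ((Qc2+d) / N2)"
      by (rule le_less_trans[OF F(15) gcap_less])
         (use F N2p d in \<open>auto intro: divide_strict_right_mono divide_nonneg_pos\<close>)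
    have g3: "T1 + T2 < gcap ((Qc1 + a*(Qc2+d)) / N1)"
      by (rule le_less_trans[OF F(13) gcap_less])
         (use F N1p d assms(1) in \<open>auto intro: divide_strict_right_mono divide_nonneg_pos\<close>)
    have g4: "T1 + T2 < gcap ((b*Qc1 + (Qc2+d)) / N2)"
      by (rule le_less_trans[OF F(16) gcap_less])
         (use F N2p d assms(3) in \<open>auto intro: divide_strict_right_mono divide_nonneg_pos\<close>)
    define e where "e = min (min (gcap (a*(Qc2+d) / N1) - T2) (gcap ((Qc2+d) / N2) - T2))
       (min (gcap ((Qc1 + a*(Qc2+d)) / N1) - (T1+T2)) (gcap ((b*Qc1 + (Qc2+d)) / N2) - (T1+T2)))"
    have e: "e > 0" using g1 g2 g3 g4 unfolding e_def by auto
    have "hk_feasible a b P1 P2 Qc1 Qp1 (Qc2+d) Qp2 T1 S1 (T2+e) S2"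
      unfolding hk_feasible_def Let_def N1_def[symmetric] N2_def[symmetric]
      using F d e unfolding e_def d_def by (auto simp: min_def)
    from opt[OF this] e assms(7) show False by simp
  qed
  show ?thesis using u1 u2 by simp
qed

end
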